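(* Let $v_0\in\mathbb{R}^n$ be a unit vector, $\tau>0$, $\epsilon\ge 0$, and let $A\in\mathbb{R}^{n^2\times n}$. Let $T=\tau(v_0\otimes v_0)v_0^T+A\in\mathbb{R}^{n^2\times n}$. Suppose $A^TA=C\cdot\mathrm{Id}_{n\times n}+E$ for some real $C\ge 0$ and a matrix $E$ with $\|E\|\le\epsilon\tau^2$, and that $\|A^T(v_0\otimes v_0)\|\le\epsilon\tau$. Then every unit top eigenvector $u$ of $T^TT$ satisfies $\langle u,v_0\rangle^2\ge 1-O(\epsilon)$.
   Context: $T$ is the $n^2\times n$ unfolding of the tensor $\tau v_0^{\otimes3}+\mathbf{A}$, with $T[(j,k),i]=\mathbf{T}_{ijk}$; norms are operator norms. *)

theory Defs
  imports "Jordan_Normal_Form.Char_Poly"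
begin

definition vnorm :: "real vec \<Rightarrow> real" where
  "vnorm v = sqrt (\<Sum>i<dim_vec v. (v $ i)^2)"

definition op_norm :: "real mat \<Rightarrow> real" where
  "op_norm M = Sup {vnorm (M *\<^sub>v x) | x. x \<in> carrier_vec (dim_col M) \<and> vnorm x = 1}"

text \<open>Kronecker product of two vectors; index (j,k) is flattened to j * dim_vec w + k.\<close>
definition kron_vec :: "real vec \<Rightarrow> real vec \<Rightarrow> real vec" where
  "kron_vec v w = vec (dim_vec v * dim_vec w)
     (\<lambda>r. v $ (r div dim_vec w) * w $ (r mod dim_vec w))"

definition top_eigenvector :: "real mat \<Rightarrow> real vec \<Rightarrow> bool" where
  "top_eigenvector M u = (\<exists>lam. eigenvector M u lam \<and> (\<forall>mu. eigenvalue M mu \<longrightarrow> mu \<le> lam))"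

end

theory Submission
  imports Defs
begin

lemma CS_sum:
  fixes a b :: "nat \<Rightarrow> real"
  shows "(\<Sum>i\<in>I. a i * b i)\<^sup>2 \<le> (\<Sum>i\<in>I. (a i)\<^sup>2) * (\<Sum>i\<in>I. (b i)\<^sup>2)"
proof -
  define SA where "SA = (\<Sum>i\<in>I. (a i)\<^sup>2)"
  define SB where "SB = (\<Sum>i\<in>I. (b i)\<^sup>2)"
  define S where "S = (\<Sum>i\<in>I. a i * b i)"
  have key: "0 \<le> SA - 2 * t * S + t\<^sup>2 * SB" for t
  proof -
    have "0 \<le> (\<Sum>i\<in>I. (a i - t * b i)\<^sup>2)" by (intro sum_nonneg) auto
    also have "(\<Sum>i\<in>I. (a i - t * b i)\<^sup>2) = (\<Sum>i\<in>I. (a i)\<^sup>2 - 2 * t * (a i * b i) + t\<^sup>2 * (b i)\<^sup>2)"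
      by (intro sum.cong) (auto simp: power2_eq_square algebra_simps)
    also have "\<dots> = SA - 2 * t * S + t\<^sup>2 * SB"
      unfolding SA_def SB_def S_def by (simp add: sum.distrib sum_subtractf sum_distrib_left)
    finally show ?thesis .
  qed
  have SB0: "0 \<le> SB" unfolding SB_def by (intro sum_nonneg) auto
  show ?thesis
  proof (cases "SB = 0")
    case True
    have "0 \<le> SA - 2 * t * S" for t using key[of t] True by simp
    have SA0: "0 \<le> SA" unfolding SA_def by (intro sum_nonneg) auto
    have "S = 0"
    proof (rule ccontr)
      assume "S \<noteq> 0"
      then have "2 * ((SA + 1) / S) * S = 2 * (SA + 1)" by simp
      with \<open>0 \<le> SA - 2 * ((SA + 1) / S) * S\<close> SA0 show False by simp
    qed
    then show ?thesis unfolding S_def[symmetric] SA_def[symmetric] SB_def[symmetric]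
      using True by simp
  next
    case False
    with SB0 have pos: "SB > 0" by simp
    have "0 \<le> SA - 2 * (S/SB) * S + (S/SB)\<^sup>2 * SB" by (rule key)
    also have "\<dots> = SA - S\<^sup>2 / SB" using pos by (simp add: power2_eq_square field_simps)
    finally have "S\<^sup>2 / SB \<le> SA" by simp
    then have "S\<^sup>2 \<le> SA * SB" using pos by (simp add: divide_le_eq)
    then show ?thesis unfolding S_def SA_def SB_def .
  qed
qed

lemma vnorm_sq: "vnorm v = sqrt (v \<bullet> v)"
  unfolding vnorm_def scalar_prod_def by (simp add: power2_eq_square atLeast0LessThan)

lemma self_sp_nonneg: "0 \<le> (v::real vec) \<bullet> v"
  unfolding scalar_prod_def by (intro sum_nonneg) auto

lemma CS_vec:
  assumes "v \<in> carrier_vec n" "w \<in> carrier_vec n"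
  shows "((v::real vec) \<bullet> w)\<^sup>2 \<le> (v \<bullet> v) * (w \<bullet> w)"
  using assms CS_sum[of "\<lambda>i. v$i" "\<lambda>i. w$i" "{0..<n}"]
  unfolding scalar_prod_def by (simp add: power2_eq_square)

lemma CS_abs:
  assumes "v \<in> carrier_vec n" "w \<in> carrier_vec n"
  shows "\<bar>(v::real vec) \<bullet> w\<bar> \<le> vnorm v * vnorm w"
proof -
  have "\<bar>v \<bullet> w\<bar> = sqrt ((v \<bullet> w)\<^sup>2)" by simp
  also have "\<dots> \<le> sqrt ((v \<bullet> v) * (w \<bullet> w))" using CS_vec[OF assms] real_sqrt_le_mono by blast
  finally show ?thesis unfolding vnorm_sq by (simp add: real_sqrt_mult)
qed

definition frob :: "real mat \<Rightarrow> real" where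
  "frob N = (\<Sum>i<dim_row N. row N i \<bullet> row N i)"

lemma frob_nonneg: "0 \<le> frob N"
  unfolding frob_def by (intro sum_nonneg) (simp add: self_sp_nonneg)

lemma frob_bound:
  assumes N: "N \<in> carrier_mat k n" and x: "x \<in> carrier_vec n"
  shows "(N *\<^sub>v x) \<bullet> (N *\<^sub>v x) \<le> frob N * (x \<bullet> x)"
proof -
  have "(N *\<^sub>v x) \<bullet> (N *\<^sub>v x) = (\<Sum>i<k. (row N i \<bullet> x)\<^sup>2)"
  proof -
    have "(N *\<^sub>v x) \<bullet> (N *\<^sub>v x) = (\<Sum>i\<in>{0..<k}. (N *\<^sub>v x) $ i * (N *\<^sub>v x) $ i)"
      using N unfolding scalar_prod_def by simp
    also have "\<dots> = (\<Sum>i<k. (row N i \<bullet> x)\<^sup>2)"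
      using N by (intro sum.cong) (auto simp: power2_eq_square)
    finally show ?thesis .
  qed
  also have "\<dots> \<le> (\<Sum>i<k. (row N i \<bullet> row N i) * (x \<bullet> x))"
    by (intro sum_mono CS_vec[of _ n]) (use N x in auto)
  also have "\<dots> = frob N * (x \<bullet> x)" using N unfolding frob_def by (simp add: sum_distrib_right)
  finally show ?thesis .
qed


lemma vnorm_le_op_norm:
  assumes E: "E \<in> carrier_mat k n" and x: "x \<in> carrier_vec n" and x1: "vnorm x = 1"
  shows "vnorm (E *\<^sub>v x) \<le> op_norm E"
proof -
  let ?S = "{vnorm (E *\<^sub>v x) | x. x \<in> carrier_vec (dim_col E) \<and> vnorm x = 1}"
  have "bdd_above ?S"
  proof (rule bdd_aboveI)
    fix y assume "y \<in> ?S"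
    then obtain z where z: "z \<in> carrier_vec n" "vnorm z = 1" and y: "y = vnorm (E *\<^sub>v z)"
      using E by auto
    have zz: "z \<bullet> z = 1" using z(2) unfolding vnorm_sq
      by (metis real_sqrt_eq_1_iff)
    have "y = sqrt ((E *\<^sub>v z) \<bullet> (E *\<^sub>v z))" using y vnorm_sq by simp
    also have "\<dots> \<le> sqrt (frob E)" using frob_bound[OF E z(1)] zz real_sqrt_le_mono by simp
    finally show "y \<le> sqrt (frob E)" .
  qed
  moreover have "vnorm (E *\<^sub>v x) \<in> ?S" using E x x1 by auto
  ultimately show ?thesis unfolding op_norm_def by (rule cSup_upper[rotated])
qed

lemma quad_expand:
  fixes M :: "real mat"
  assumes M: "M \<in> carrier_mat n n" and sym: "transpose_mat M = M"
    and x: "x \<in> carrier_vec n" and d: "d \<in> carrier_vec n"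
  shows "(x + t \<cdot>\<^sub>v d) \<bullet> (M *\<^sub>v (x + t \<cdot>\<^sub>v d)) =
     x \<bullet> (M *\<^sub>v x) + 2 * t * (d \<bullet> (M *\<^sub>v x)) + t\<^sup>2 * (d \<bullet> (M *\<^sub>v d))"
proof -
  have symm: "x \<bullet> (M *\<^sub>v d) = d \<bullet> (M *\<^sub>v x)"
  proof -
    have "x \<bullet> (M *\<^sub>v d) = (transpose_mat M *\<^sub>v x) \<bullet> d"
      using transpose_vec_mult_scalar[where A=M and x=d and y=x and nr=n and nc=n] M d x by simp
    also have "\<dots> = d \<bullet> (M *\<^sub>v x)" using sym comm_scalar_prod[of d n "M *\<^sub>v x"] M d x by simp
    finally show ?thesis .
  qed
  have Mx: "M *\<^sub>v x \<in> carrier_vec n" and Md: "M *\<^sub>v d \<in> carrier_vec n" using M x d by auto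
  have "M *\<^sub>v (x + t \<cdot>\<^sub>v d) = M *\<^sub>v x + t \<cdot>\<^sub>v (M *\<^sub>v d)"
    using M x d by (simp add: mult_add_distrib_mat_vec mult_mat_vec)
  then have "(x + t \<cdot>\<^sub>v d) \<bullet> (M *\<^sub>v (x + t \<cdot>\<^sub>v d)) =
     x \<bullet> (M *\<^sub>v x) + t * (x \<bullet> (M *\<^sub>v d)) + t * (d \<bullet> (M *\<^sub>v x)) + t * t * (d \<bullet> (M *\<^sub>v d))"
    using x d Mx Md
    by (simp add: add_scalar_prod_distrib[of x n] scalar_prod_add_distrib[of _ n] algebra_simps)
  then show ?thesis using symm by (simp add: power2_eq_square algebra_simps)
qed


lemma smult_one_mat_vec:
  fixes x :: "real vec"
  assumes x: "x \<in> carrier_vec n"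
  shows "(c \<cdot>\<^sub>m 1\<^sub>m n) *\<^sub>v x = c \<cdot>\<^sub>v x"
proof (rule eq_vecI)
  show "dim_vec ((c \<cdot>\<^sub>m 1\<^sub>m n) *\<^sub>v x) = dim_vec (c \<cdot>\<^sub>v x)" using x by simp
  fix i assume "i < dim_vec (c \<cdot>\<^sub>v x)"
  then have i: "i < n" using x by simp
  have "row (c \<cdot>\<^sub>m 1\<^sub>m n) i = c \<cdot>\<^sub>v unit_vec n i" using i
    by (intro eq_vecI) (auto simp: unit_vec_def)
  then show "((c \<cdot>\<^sub>m 1\<^sub>m n) *\<^sub>v x) $ i = (c \<cdot>\<^sub>v x) $ i"
    using i x by simp
qed

lemma char_matrix_apply:
  fixes M :: "real mat"
  assumes M: "M \<in> carrier_mat n n" and x: "x \<in> carrier_vec n"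
  shows "char_matrix M s *\<^sub>v x = M *\<^sub>v x - s \<cdot>\<^sub>v x"
proof -
  have "char_matrix M s *\<^sub>v x = M *\<^sub>v x + ((-s) \<cdot>\<^sub>m 1\<^sub>m n) *\<^sub>v x"
    unfolding char_matrix_def using M x by (simp add: add_mult_distrib_mat_vec[of _ n n])
  also have "\<dots> = M *\<^sub>v x + (-s) \<cdot>\<^sub>v x" using smult_one_mat_vec[OF x] by simp
  also have "\<dots> = M *\<^sub>v x - s \<cdot>\<^sub>v x" using M x by (intro eq_vecI) auto
  finally show ?thesis .
qed


lemma qbound:
  fixes M :: "real mat"
  assumes M: "M \<in> carrier_mat n n" and z: "z \<in> carrier_vec n"
  shows "\<bar>z \<bullet> (M *\<^sub>v z)\<bar> \<le> (1 + frob M) * (z \<bullet> z)"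
proof -
  define a where "a = z \<bullet> (M *\<^sub>v z)"
  define q where "q = z \<bullet> z"
  define F where "F = frob M"
  have q0: "0 \<le> q" unfolding q_def by (rule self_sp_nonneg)
  have F0: "0 \<le> F" unfolding F_def by (rule frob_nonneg)
  have "a\<^sup>2 \<le> q * ((M *\<^sub>v z) \<bullet> (M *\<^sub>v z))" unfolding a_def q_def
    using CS_vec[of z n "M *\<^sub>v z"] M z by simp
  also have "\<dots> \<le> q * (F * q)" unfolding F_def q_def
    using frob_bound[OF M z] self_sp_nonneg[of z] by (simp add: mult_left_mono)
  also have "\<dots> \<le> ((1 + F) * q)\<^sup>2"
  proof -
    have "F \<le> (1 + F)\<^sup>2" using F0 by (simp add: power2_eq_square algebra_simps)
    then have "F * q\<^sup>2 \<le> (1 + F)\<^sup>2 * q\<^sup>2" by (simp add: mult_right_mono)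
    then show ?thesis by (simp add: power2_eq_square power_mult_distrib algebra_simps)
  qed
  finally have "\<bar>a\<bar> \<le> \<bar>(1 + F) * q\<bar>" using abs_le_square_iff by blast
  then show ?thesis using F0 q0 unfolding a_def q_def F_def by simp
qed

lemma exists_top_eig:
  fixes M :: "real mat"
  assumes M: "M \<in> carrier_mat n n" and sym: "transpose_mat M = M"
    and y: "y \<in> carrier_vec n" and yy: "y \<bullet> y = 1"
  shows "\<exists>s. eigenvalue M s \<and> y \<bullet> (M *\<^sub>v y) \<le> s"
proof -
  define Q where "Q = {x \<bullet> (M *\<^sub>v x) | x. x \<in> carrier_vec n \<and> x \<bullet> x = 1}"
  define R where "R = 1 + frob M"
  have R1: "1 \<le> R" unfolding R_def using frob_nonneg by simp
  have qb: "\<bar>z \<bullet> (M *\<^sub>v z)\<bar> \<le> R * (z \<bullet> z)" if "z \<in> carrier_vec n" for z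
    unfolding R_def by (rule qbound[OF M that])
  have bdd: "bdd_above Q"
  proof (rule bdd_aboveI)
    fix a assume "a \<in> Q"
    then obtain x where x: "x \<in> carrier_vec n" "x \<bullet> x = 1" and a: "a = x \<bullet> (M *\<^sub>v x)"
      unfolding Q_def by auto
    show "a \<le> R" using qb[OF x(1)] x(2) a by simp
  qed
  have yQ: "y \<bullet> (M *\<^sub>v y) \<in> Q" unfolding Q_def using y yy by auto
  then have Qne: "Q \<noteq> {}" by auto
  define s where "s = Sup Q"
  have yle: "y \<bullet> (M *\<^sub>v y) \<le> s" unfolding s_def using bdd yQ by (simp add: cSup_upper)
  have sR: "s \<le> R" unfolding s_def
  proof (rule cSup_least[OF Qne])
    fix a assume "a \<in> Q"
    then obtain x where x: "x \<in> carrier_vec n" "x \<bullet> x = 1" and a: "a = x \<bullet> (M *\<^sub>v x)"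
      unfolding Q_def by auto
    show "a \<le> R" using qb[OF x(1)] x(2) a by simp
  qed
  have sR2: "- R \<le> s" using yle qb[OF y] yy by simp
  have hom: "z \<bullet> (M *\<^sub>v z) \<le> s * (z \<bullet> z)" if z: "z \<in> carrier_vec n" for z
  proof (cases "z \<bullet> z = 0")
    case True
    then show ?thesis using qb[OF z] by simp
  next
    case False
    define q where "q = z \<bullet> z"
    have q: "0 < q" using False self_sp_nonneg[of z] unfolding q_def by simp
    define x where "x = (1 / sqrt q) \<cdot>\<^sub>v z"
    have x: "x \<in> carrier_vec n" unfolding x_def using z by simp
    have "x \<bullet> x = (1 / sqrt q) * (1 / sqrt q) * q" unfolding x_def q_def using z by simp
    also have "\<dots> = 1" using q by (simp add: field_simps)
    finally have xx: "x \<bullet> x = 1" .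
    have "x \<bullet> (M *\<^sub>v x) = (1 / sqrt q) * (1 / sqrt q) * (z \<bullet> (M *\<^sub>v z))"
      unfolding x_def using z M by (simp add: mult_mat_vec)
    also have "\<dots> = (z \<bullet> (M *\<^sub>v z)) / q" using q by (simp add: field_simps)
    finally have eq: "x \<bullet> (M *\<^sub>v x) = (z \<bullet> (M *\<^sub>v z)) / q" .
    have "x \<bullet> (M *\<^sub>v x) \<in> Q" unfolding Q_def using x xx by auto
    then have "x \<bullet> (M *\<^sub>v x) \<le> s" unfolding s_def using bdd by (simp add: cSup_upper)
    then have "(z \<bullet> (M *\<^sub>v z)) / q \<le> s" using eq by simp
    then show ?thesis using q unfolding q_def by (simp add: divide_le_eq)
  qed
  have "eigenvalue M s"
  proof (rule ccontr)
    assume ne: "\<not> eigenvalue M s"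
    have cm: "char_matrix M s \<in> carrier_mat n n" using M by simp
    have "det (char_matrix M s) \<noteq> 0" using ne eigenvalue_det[OF M] by simp
    from det_non_zero_imp_unit[OF cm this, of "()"]
    obtain B where unit: "B * char_matrix M s = 1\<^sub>m n" and B: "B \<in> carrier_mat n n"
      unfolding Units_def ring_mat_def by auto
    define G where "G = frob B + 1"
    have G: "0 < G" unfolding G_def using frob_nonneg[of B] by simp
    define \<delta> where "\<delta> = 1 / (2 * R * G)"
    have \<delta>: "0 < \<delta>" unfolding \<delta>_def using G R1 by simp
    have "s - \<delta> < Sup Q" using \<delta> unfolding s_def by simp
    then obtain a where "a \<in> Q" "s - \<delta> < a" using less_cSup_iff[OF Qne bdd] by blast
    then obtain x where x: "x \<in> carrier_vec n" "x \<bullet> x = 1" and xa: "s - \<delta> < x \<bullet> (M *\<^sub>v x)"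
      unfolding Q_def by auto
    define g where "g = M *\<^sub>v x - s \<cdot>\<^sub>v x"
    have g: "g \<in> carrier_vec n" unfolding g_def using M x by simp
    have Mx: "M *\<^sub>v x \<in> carrier_vec n" using M x by simp
    have "x = B *\<^sub>v g"
    proof -
      have "B *\<^sub>v g = B *\<^sub>v (char_matrix M s *\<^sub>v x)" unfolding g_def using char_matrix_apply[OF M x(1)] by simp
      also have "\<dots> = (B * char_matrix M s) *\<^sub>v x" using B cm x by simp
      also have "\<dots> = x" using unit x by simp
      finally show ?thesis by simp
    qed
    then have "x \<bullet> x \<le> frob B * (g \<bullet> g)" using frob_bound[OF B g] by simp
    then have low: "1 \<le> G * (g \<bullet> g)" using x(2) self_sp_nonneg[of g] unfolding G_def
      by (simp add: algebra_simps)
    define t where "t = 1 / (2 * R)"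
    have t: "0 < t" unfolding t_def using R1 by simp
    have I1: "1\<^sub>m n \<in> carrier_mat n n" by simp
    have eqQ: "(x + t \<cdot>\<^sub>v g) \<bullet> (M *\<^sub>v (x + t \<cdot>\<^sub>v g)) =
       x \<bullet> (M *\<^sub>v x) + 2 * t * (g \<bullet> (M *\<^sub>v x)) + t\<^sup>2 * (g \<bullet> (M *\<^sub>v g))"
      by (rule quad_expand[OF M sym x(1) g])
    have eqN: "(x + t \<cdot>\<^sub>v g) \<bullet> (x + t \<cdot>\<^sub>v g) =
       x \<bullet> x + 2 * t * (g \<bullet> x) + t\<^sup>2 * (g \<bullet> g)"
      using quad_expand[OF I1 _ x(1) g, of t] x g by simp
    have zc: "x + t \<cdot>\<^sub>v g \<in> carrier_vec n" using x g by simp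
    have H: "x \<bullet> (M *\<^sub>v x) + 2 * t * (g \<bullet> (M *\<^sub>v x)) + t\<^sup>2 * (g \<bullet> (M *\<^sub>v g))
        \<le> s * (1 + 2 * t * (g \<bullet> x) + t\<^sup>2 * (g \<bullet> g))"
      using hom[OF zc] eqQ eqN x(2) by simp
    have gg: "g \<bullet> (M *\<^sub>v x) - s * (g \<bullet> x) = g \<bullet> g"
      unfolding g_def[of] using scalar_prod_minus_distrib[OF g Mx, of "s \<cdot>\<^sub>v x"] x g
      by (simp add: g_def)
    have gMg: "- R * (g \<bullet> g) \<le> g \<bullet> (M *\<^sub>v g)" using qb[OF g] by simp
    have sg: "s * (g \<bullet> g) \<le> R * (g \<bullet> g)" using sR self_sp_nonneg[of g] by (simp add: mult_right_mono)
    define q where "q = g \<bullet> g"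
    define m where "m = x \<bullet> (M *\<^sub>v x)"
    have q0: "0 \<le> q" unfolding q_def by (rule self_sp_nonneg)
    have H2: "m + 2 * t * q + t\<^sup>2 * (g \<bullet> (M *\<^sub>v g) - s * q) \<le> s"
      using H gg unfolding q_def m_def by (simp add: algebra_simps)
    have "t\<^sup>2 * (- 2 * R * q) \<le> t\<^sup>2 * (g \<bullet> (M *\<^sub>v g) - s * q)"
      using gMg sg unfolding q_def by (intro mult_left_mono) auto
    with H2 have "m + 2 * t * q - t\<^sup>2 * 2 * R * q \<le> s" by simp
    moreover have "2 * t * q - t\<^sup>2 * 2 * R * q = q / (2 * R)"
      unfolding t_def using R1 by (simp add: power2_eq_square field_simps)
    ultimately have "q / (2 * R) \<le> s - m" by simp
    also have "\<dots> < \<delta>" using xa unfolding m_def by simp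
    finally have "q / (2 * R) < 1 / (2 * R * G)" unfolding \<delta>_def .
    then have "q * G < 1" using R1 G by (simp add: field_simps)
    with low show False unfolding q_def by (simp add: algebra_simps)
  qed
  then show ?thesis using yle by blast
qed


lemma kron_self:
  fixes v :: "real vec"
  assumes v: "v \<in> carrier_vec n"
  shows "kron_vec v v \<bullet> kron_vec v v = (v \<bullet> v)\<^sup>2"
proof -
  have "kron_vec v v \<bullet> kron_vec v v = (\<Sum>r<n*n. (v $ (r div n) * v $ (r mod n))\<^sup>2)"
    using v unfolding kron_vec_def scalar_prod_def by (simp add: power2_eq_square atLeast0LessThan)
  also have "\<dots> = (\<Sum>p\<in>{..<n}\<times>{..<n}. (v $ fst p * v $ snd p)\<^sup>2)"
  proof (rule sum.reindex_bij_witness[where i = "\<lambda>p. fst p * n + snd p" and j = "\<lambda>r. (r div n, r mod n)"])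
    fix r assume r: "r \<in> {..<n*n}"
    then have "n > 0" by (cases n) auto
    then show "fst (r div n, r mod n) * n + snd (r div n, r mod n) = r" by simp
    show "(r div n, r mod n) \<in> {..<n}\<times>{..<n}" using r \<open>n > 0\<close>
      by (auto simp: less_mult_imp_div_less)
    show "(v $ fst (r div n, r mod n) * v $ snd (r div n, r mod n))\<^sup>2 = (v $ (r div n) * v $ (r mod n))\<^sup>2"
      by simp
  next
    fix p :: "nat \<times> nat" assume p: "p \<in> {..<n}\<times>{..<n}"
    then obtain a b where ab: "p = (a,b)" "a < n" "b < n" by auto
    show "((fst p * n + snd p) div n, (fst p * n + snd p) mod n) = p" using ab by simp
    have "a * n + b < (a + 1) * n" using ab by simp
    also have "\<dots> \<le> n * n" using ab by (intro mult_right_mono) auto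
    finally show "fst p * n + snd p \<in> {..<n*n}" using ab by simp
  qed
  also have "\<dots> = (\<Sum>a<n. \<Sum>b<n. (v $ a)\<^sup>2 * (v $ b)\<^sup>2)"
    by (simp add: sum.cartesian_product power_mult_distrib split_beta)
  also have "\<dots> = (\<Sum>a<n. (v $ a)\<^sup>2) * (\<Sum>b<n. (v $ b)\<^sup>2)"
    by (simp add: sum_product)
  also have "\<dots> = (v \<bullet> v)\<^sup>2"
    using v unfolding scalar_prod_def by (simp add: power2_eq_square atLeast0LessThan)
  finally show ?thesis .
qed

lemma P_apply:
  fixes v w x :: "real vec"
  assumes v: "v \<in> carrier_vec n" and w: "w \<in> carrier_vec m" and x: "x \<in> carrier_vec n"
  shows "(mat_of_cols m [w] * mat_of_rows n [v]) *\<^sub>v x = (v \<bullet> x) \<cdot>\<^sub>v w"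
proof -
  have "(mat_of_cols m [w] * mat_of_rows n [v]) *\<^sub>v x = mat_of_cols m [w] *\<^sub>v (mat_of_rows n [v] *\<^sub>v x)"
    using x by (intro assoc_mult_mat_vec) auto
  also have "mat_of_rows n [v] *\<^sub>v x = vec 1 (\<lambda>_. v \<bullet> x)"
  proof -
    have r: "row (mat_of_rows n [v]) 0 = v" using v by (intro eq_vecI) auto
    show ?thesis using v x r by (intro eq_vecI) auto
  qed
  also have "mat_of_cols m [w] *\<^sub>v vec 1 (\<lambda>_. v \<bullet> x) = (v \<bullet> x) \<cdot>\<^sub>v w"
    using w by (intro eq_vecI) (auto simp: mat_of_cols_def scalar_prod_def row_def)
  finally show ?thesis .
qed


theorem mainTheorem9:
  "\<exists>K::real. \<forall>(n::nat) (v0::real vec) (\<tau>::real) (\<epsilon>::real) (A::real mat) (C::real) (E::real mat) (u::real vec).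
     v0 \<in> carrier_vec n \<longrightarrow> vnorm v0 = 1 \<longrightarrow> \<tau> > 0 \<longrightarrow> \<epsilon> \<ge> 0 \<longrightarrow>
     A \<in> carrier_mat (n * n) n \<longrightarrow>
     C \<ge> 0 \<longrightarrow> E \<in> carrier_mat n n \<longrightarrow>
     transpose_mat A * A = C \<cdot>\<^sub>m 1\<^sub>m n + E \<longrightarrow>
     op_norm E \<le> \<epsilon> * \<tau>^2 \<longrightarrow>
     vnorm (transpose_mat A *\<^sub>v kron_vec v0 v0) \<le> \<epsilon> * \<tau> \<longrightarrow>
     (let T = \<tau> \<cdot>\<^sub>m (mat_of_cols (n * n) [kron_vec v0 v0] * mat_of_rows n [v0]) + A in
       top_eigenvector (transpose_mat T * T) u \<longrightarrow> vnorm u = 1 \<longrightarrow>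
       (u \<bullet> v0)^2 \<ge> 1 - K * \<epsilon>)"
proof (rule exI[of _ 6], intro allI impI, unfold Let_def, intro impI)
  fix n v0 \<tau> \<epsilon> A C E u
  assume v0: "v0 \<in> carrier_vec n" and v01: "vnorm v0 = 1" and \<tau>: "\<tau> > 0" and \<epsilon>: "\<epsilon> \<ge> 0"
    and A: "A \<in> carrier_mat (n * n) n" and C: "C \<ge> 0" and E: "E \<in> carrier_mat n n"
    and AA: "transpose_mat A * A = C \<cdot>\<^sub>m 1\<^sub>m n + E"
    and En: "op_norm E \<le> \<epsilon> * \<tau>^2"
    and bn: "vnorm (transpose_mat A *\<^sub>v kron_vec v0 v0) \<le> \<epsilon> * \<tau>"
  define w where "w = kron_vec v0 v0"
  define P where "P = mat_of_cols (n * n) [w] * mat_of_rows n [v0]"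
  define T where "T = \<tau> \<cdot>\<^sub>m P + A"
  define M where "M = transpose_mat T * T"
  define b where "b = transpose_mat A *\<^sub>v w"
  assume top: "top_eigenvector (transpose_mat (\<tau> \<cdot>\<^sub>m (mat_of_cols (n * n) [kron_vec v0 v0] * mat_of_rows n [v0]) + A) *
        (\<tau> \<cdot>\<^sub>m (mat_of_cols (n * n) [kron_vec v0 v0] * mat_of_rows n [v0]) + A)) u"
    and u1: "vnorm u = 1"
  have topM: "top_eigenvector M u" using top unfolding M_def T_def P_def w_def .
  have w: "w \<in> carrier_vec (n * n)" unfolding w_def kron_vec_def using v0 by simp
  have P: "P \<in> carrier_mat (n * n) n" unfolding P_def
    using mat_of_cols_carrier(1)[of "n*n" "[w]"] mat_of_rows_carrier(1)[of n "[v0]"]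
    by (intro mult_carrier_mat[of _ _ 1]) auto
  have T: "T \<in> carrier_mat (n * n) n" unfolding T_def using P A by simp
  have M: "M \<in> carrier_mat n n" unfolding M_def using T by simp
  have sym: "transpose_mat M = M" unfolding M_def using T by (simp add: transpose_mult)
  have b: "b \<in> carrier_vec n" unfolding b_def using A w by simp
  have bn': "vnorm b \<le> \<epsilon> * \<tau>" using bn unfolding b_def w_def .
  have v0v0: "v0 \<bullet> v0 = 1" using v01 unfolding vnorm_sq by (metis real_sqrt_eq_1_iff)
  have ww: "w \<bullet> w = 1" unfolding w_def using kron_self[OF v0] v0v0 by simp
  have Tx: "T *\<^sub>v x = (\<tau> * (v0 \<bullet> x)) \<cdot>\<^sub>v w + A *\<^sub>v x" if x: "x \<in> carrier_vec n" for x
  proof -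
    have "T *\<^sub>v x = (\<tau> \<cdot>\<^sub>m P) *\<^sub>v x + A *\<^sub>v x" unfolding T_def
      using P A x by (simp add: add_mult_distrib_mat_vec[of _ "n*n" n])
    also have "(\<tau> \<cdot>\<^sub>m P) *\<^sub>v x = \<tau> \<cdot>\<^sub>v (P *\<^sub>v x)" using P x by (intro eq_vecI) auto
    also have "P *\<^sub>v x = (v0 \<bullet> x) \<cdot>\<^sub>v w" unfolding P_def by (rule P_apply[OF v0 w x])
    also have "\<tau> \<cdot>\<^sub>v ((v0 \<bullet> x) \<cdot>\<^sub>v w) = (\<tau> * (v0 \<bullet> x)) \<cdot>\<^sub>v w" by (simp add: smult_smult_assoc)
    finally show ?thesis .
  qed
  have fx: "x \<bullet> (M *\<^sub>v x) = \<tau>\<^sup>2 * (v0 \<bullet> x)\<^sup>2 + 2 * \<tau> * (v0 \<bullet> x) * (b \<bullet> x) + C * (x \<bullet> x) + x \<bullet> (E *\<^sub>v x)"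
    if x: "x \<in> carrier_vec n" for x
  proof -
    have Txc: "T *\<^sub>v x \<in> carrier_vec (n*n)" using T x by simp
    have Ax: "A *\<^sub>v x \<in> carrier_vec (n*n)" using A x by simp
    have Ex: "E *\<^sub>v x \<in> carrier_vec n" using E x by simp
    have MTx: "M *\<^sub>v x = transpose_mat T *\<^sub>v (T *\<^sub>v x)" unfolding M_def using T x by simp
    have "x \<bullet> (M *\<^sub>v x) = (M *\<^sub>v x) \<bullet> x" using M x by (simp add: comm_scalar_prod[of x n])
    also have "M *\<^sub>v x = transpose_mat T *\<^sub>v (T *\<^sub>v x)" unfolding M_def using T x by simp
    also have "(transpose_mat T *\<^sub>v (T *\<^sub>v x)) \<bullet> x = (T *\<^sub>v x) \<bullet> (T *\<^sub>v x)"
      by (rule transpose_vec_mult_scalar[OF T x Txc])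
    also have "\<dots> = (\<tau> * (v0 \<bullet> x))\<^sup>2 * (w \<bullet> w) + 2 * (\<tau> * (v0 \<bullet> x)) * (w \<bullet> (A *\<^sub>v x))
        + (A *\<^sub>v x) \<bullet> (A *\<^sub>v x)"
      unfolding Tx[OF x] using w Ax
      by (simp add: add_scalar_prod_distrib[of _ "n*n"] scalar_prod_add_distrib[of _ "n*n"]
          comm_scalar_prod[of "A *\<^sub>v x" "n*n" w] power2_eq_square algebra_simps)
    also have "w \<bullet> (A *\<^sub>v x) = b \<bullet> x" unfolding b_def
      using transpose_vec_mult_scalar[OF A x w] by simp
    also have "(A *\<^sub>v x) \<bullet> (A *\<^sub>v x) = (transpose_mat A *\<^sub>v (A *\<^sub>v x)) \<bullet> x"
      using transpose_vec_mult_scalar[OF A x Ax] by simp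
    also have "transpose_mat A *\<^sub>v (A *\<^sub>v x) = (transpose_mat A * A) *\<^sub>v x" using A x by simp
    also have "\<dots> = C \<cdot>\<^sub>v x + E *\<^sub>v x" unfolding AA using E x
      by (simp add: add_mult_distrib_mat_vec[of _ n n] smult_one_mat_vec)
    also have "(C \<cdot>\<^sub>v x + E *\<^sub>v x) \<bullet> x = C * (x \<bullet> x) + x \<bullet> (E *\<^sub>v x)"
      using x Ex by (simp add: add_scalar_prod_distrib[of _ n] comm_scalar_prod[of "E *\<^sub>v x" n x])
    finally show ?thesis using ww MTx by (simp add: power_mult_distrib algebra_simps)
  qed
  have bx: "\<bar>b \<bullet> x\<bar> \<le> \<epsilon> * \<tau>" if x: "x \<in> carrier_vec n" "vnorm x = 1" for x
    using CS_abs[OF b x(1)] x(2) bn' by simp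
  have ex: "\<bar>x \<bullet> (E *\<^sub>v x)\<bar> \<le> \<epsilon> * \<tau>\<^sup>2" if x: "x \<in> carrier_vec n" "vnorm x = 1" for x
  proof -
    have "\<bar>x \<bullet> (E *\<^sub>v x)\<bar> \<le> vnorm x * vnorm (E *\<^sub>v x)" using CS_abs[of x n "E *\<^sub>v x"] x E by simp
    also have "\<dots> \<le> op_norm E" using vnorm_le_op_norm[OF E x] x by simp
    finally show ?thesis using En by simp
  qed
  from topM obtain lam where ev: "eigenvector M u lam" and mx: "\<forall>mu. eigenvalue M mu \<longrightarrow> mu \<le> lam"
    unfolding top_eigenvector_def by blast
  have u: "u \<in> carrier_vec n" and Mu: "M *\<^sub>v u = lam \<cdot>\<^sub>v u" using ev M unfolding eigenvector_def by auto
  have uu: "u \<bullet> u = 1" using u1 unfolding vnorm_sq by (metis real_sqrt_eq_1_iff)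
  have lam: "u \<bullet> (M *\<^sub>v u) = lam" using Mu u uu by simp
  obtain s where s: "eigenvalue M s" and sv: "v0 \<bullet> (M *\<^sub>v v0) \<le> s"
    using exists_top_eig[OF M sym v0 v0v0] by blast
  have "s \<le> lam" using mx s by blast
  with sv lam have main: "v0 \<bullet> (M *\<^sub>v v0) \<le> u \<bullet> (M *\<^sub>v u)" by simp
  define c where "c = v0 \<bullet> u"
  have c2: "c\<^sup>2 \<le> 1" unfolding c_def using CS_vec[OF v0 u] v0v0 uu by simp
  have c1: "\<bar>c\<bar> \<le> 1" using c2 abs_le_square_iff[of c 1] by simp
  have f0: "v0 \<bullet> (M *\<^sub>v v0) = \<tau>\<^sup>2 + 2 * \<tau> * (b \<bullet> v0) + C + v0 \<bullet> (E *\<^sub>v v0)"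
    using fx[OF v0] v0v0 by simp
  have fu: "u \<bullet> (M *\<^sub>v u) = \<tau>\<^sup>2 * c\<^sup>2 + 2 * \<tau> * (c * (b \<bullet> u)) + C + u \<bullet> (E *\<^sub>v u)"
    using fx[OF u] uu unfolding c_def by (simp add: algebra_simps)
  have b0: "- (\<epsilon> * \<tau>) \<le> b \<bullet> v0" using bx[OF v0 v01] by simp
  have cbu: "c * (b \<bullet> u) \<le> \<epsilon> * \<tau>"
  proof -
    have "c * (b \<bullet> u) \<le> \<bar>c\<bar> * \<bar>b \<bullet> u\<bar>" by (simp add: abs_mult[symmetric])
    also have "\<dots> \<le> 1 * (\<epsilon> * \<tau>)" using c1 bx[OF u u1] by (intro mult_mono) auto
    finally show ?thesis by simp
  qed
  have e0: "- (\<epsilon> * \<tau>\<^sup>2) \<le> v0 \<bullet> (E *\<^sub>v v0)" using ex[OF v0 v01] by simp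
  have eu: "u \<bullet> (E *\<^sub>v u) \<le> \<epsilon> * \<tau>\<^sup>2" using ex[OF u u1] by simp
  have t1: "2 * \<tau> * (- (\<epsilon> * \<tau>)) \<le> 2 * \<tau> * (b \<bullet> v0)" using mult_left_mono[OF b0, of "2 * \<tau>"] \<tau> by simp
  have t2: "2 * \<tau> * (c * (b \<bullet> u)) \<le> 2 * \<tau> * (\<epsilon> * \<tau>)" using mult_left_mono[OF cbu, of "2 * \<tau>"] \<tau> by simp
  have "\<tau>\<^sup>2 - 2 * \<tau> * (\<epsilon> * \<tau>) - \<epsilon> * \<tau>\<^sup>2 \<le> \<tau>\<^sup>2 * c\<^sup>2 + 2 * \<tau> * (\<epsilon> * \<tau>) + \<epsilon> * \<tau>\<^sup>2"
    using main f0 fu t1 t2 e0 eu by linarith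
  then have "\<tau>\<^sup>2 * (1 - 6 * \<epsilon>) \<le> \<tau>\<^sup>2 * c\<^sup>2" by (simp add: power2_eq_square algebra_simps)
  then have "1 - 6 * \<epsilon> \<le> c\<^sup>2" using \<tau> by simp
  moreover have "u \<bullet> v0 = c" unfolding c_def using comm_scalar_prod[OF u v0] .
  ultimately show "1 - 6 * \<epsilon> \<le> (u \<bullet> v0)\<^sup>2" by simp
qed

end
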